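(* Let $\ell$ be an odd integer with $\ell\equiv 3$ or $5 \pmod 8$, and let $t$ be a positive even integer. Let $G$ be the graph obtained from a cycle $C_\ell$ of length $\ell$ by attaching a path of length $t$ (i.e. with $t$ edges and $t$ new vertices) at one vertex of the cycle, so that one end of the path is identified with a cycle vertex. Then $G$ has $\ell+t$ vertices and $\mathrm{GP}(G)$ is not an integer.
   Context: All graphs are simple and finite. For a connected graph $G$, $d_G(u,v)$ denotes the shortest-path distance and $\mathrm{Aut}(G)$ the automorphism group. The Graovac-Pisanski index is $$\mathrm{GP}(G)=\frac{|V(G)|}{2|\mathrm{Aut}(G)|}\sum_{u\in V(G)}\sum_{\alpha\in \mathrm{Aut}(G)} d_G(u,\alpha(u)).$$ *)

theory Defs
  imports Complex_Main
begin

text \<open>A (simple, undirected) graph is given by a finite vertex set V and a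
symmetric, irreflexive adjacency predicate E (only its restriction to V matters).\<close>

definition adj_rel :: "'a set \<Rightarrow> ('a \<Rightarrow> 'a \<Rightarrow> bool) \<Rightarrow> ('a \<times> 'a) set" where
  "adj_rel V E = {(x, y). x \<in> V \<and> y \<in> V \<and> E x y}"

definition gdist :: "'a set \<Rightarrow> ('a \<Rightarrow> 'a \<Rightarrow> bool) \<Rightarrow> 'a \<Rightarrow> 'a \<Rightarrow> nat" where
  "gdist V E u v = (LEAST n. (u, v) \<in> adj_rel V E ^^ n)"

definition graph_aut :: "'a set \<Rightarrow> ('a \<Rightarrow> 'a \<Rightarrow> bool) \<Rightarrow> ('a \<Rightarrow> 'a) set" where
  "graph_aut V E = {f. bij_betw f V V \<and> (\<forall>u\<in>V. \<forall>v\<in>V. E u v \<longleftrightarrow> E (f u) (f v))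
                      \<and> (\<forall>x. x \<notin> V \<longrightarrow> f x = x)}"

definition GP :: "'a set \<Rightarrow> ('a \<Rightarrow> 'a \<Rightarrow> bool) \<Rightarrow> real" where
  "GP V E = real (card V) / (2 * real (card (graph_aut V E))) *
     (\<Sum>u\<in>V. \<Sum>\<alpha>\<in>graph_aut V E. real (gdist V E u (\<alpha> u)))"

text \<open>The graph obtained from the cycle C_l on vertices 0,...,l-1 by attaching a path
of length t at vertex 0: new vertices l,...,l+t-1, edges 0--l and (l+i)--(l+i+1).\<close>
definition cp_vertices :: "nat \<Rightarrow> nat \<Rightarrow> nat set" where
  "cp_vertices l t = {0..<l + t}"

definition cp_arc :: "nat \<Rightarrow> nat \<Rightarrow> nat \<Rightarrow> nat \<Rightarrow> bool" where
  "cp_arc l t x y \<longleftrightarrow>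
     (x < l \<and> y = (x + 1) mod l)
   \<or> (0 < t \<and> x = 0 \<and> y = l)
   \<or> (l \<le> x \<and> y = x + 1 \<and> y < l + t)"

definition cp_edge :: "nat \<Rightarrow> nat \<Rightarrow> nat \<Rightarrow> nat \<Rightarrow> bool" where
  "cp_edge l t x y \<longleftrightarrow> x \<noteq> y \<and> (cp_arc l t x y \<or> cp_arc l t y x)"

end

theory Submission
  imports Defs
begin

lemma arc_cyc: "(x < l \<and> y = (x + 1) mod (l::nat)) \<longleftrightarrow> (x < l \<and> ((x+1 < l \<and> y = x+1) \<or> (x + 1 = l \<and> y = 0)))"
proof (cases "x + 1 < l")
  case False
  have "x < l \<Longrightarrow> (x + 1) mod l = 0" using False
    by (metis Suc_eq_plus1 Suc_lessI mod_self)
  then show ?thesis using False by auto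
qed auto

lemma edge_iff:
  assumes "l \<ge> 3"
  shows "cp_edge l t x y \<longleftrightarrow>
    (x<l \<and> y<l \<and> (y = x+1 \<or> x = y+1 \<or> (x=0 \<and> y+1 = l) \<or> (y=0 \<and> x+1=l)))
    \<or> (0<t \<and> ((x=0 \<and> y=l) \<or> (y=0 \<and> x = l)))
    \<or> (l \<le> x \<and> l \<le> y \<and> ((y = x+1 \<and> y < l+t) \<or> (x = y+1 \<and> x < l+t)))"
  unfolding cp_edge_def cp_arc_def arc_cyc using assms by auto

lemma sum_lin:
  fixes c d :: int
  assumes "a \<le> b"
  shows "2 * (\<Sum>x\<in>{a..<b}. (c + d * int x)) = 2 * int (b - a) * c + d * (int b * (int b - 1) - int a * (int a - 1))"
  using assms
proof (induction b rule: dec_induct)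
  case base then show ?case by simp
next
  case (step n)
  then show ?case by (simp add: algebra_simps of_nat_diff)
qed

lemma lip:
  fixes h :: "'a \<Rightarrow> int"
  assumes "\<And>x y. (x,y) \<in> R \<Longrightarrow> h x \<le> h y + 1"
  shows "(u,v) \<in> R ^^ n \<Longrightarrow> h u \<le> h v + int n"
proof (induction n arbitrary: v)
  case 0 then show ?case by simp
next
  case (Suc n)
  then obtain w where "(u,w) \<in> R^^n" "(w,v) \<in> R" by auto
  with Suc.IH[of w] assms[of w v] show ?case by simp
qed

definition sg :: "nat \<Rightarrow> nat \<Rightarrow> nat" where
  "sg l x = (if x = 0 then 0 else if x < l then l - x else x)"

lemma sg_sg: "sg l (sg l x) = x"
  unfolding sg_def by auto

lemma sg_in: "x < l + t \<Longrightarrow> sg l x < l + t"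
  unfolding sg_def by auto

lemma sg_edge:
  assumes "l \<ge> 3" "cp_edge l t u v"
  shows "cp_edge l t (sg l u) (sg l v)"
  using assms(2) unfolding edge_iff[OF assms(1)] sg_def using assms(1) by auto

lemma sg_aut:
  assumes "l \<ge> 3"
  shows "sg l \<in> graph_aut (cp_vertices l t) (cp_edge l t)"
proof -
  have "bij_betw (sg l) {0..<l+t} {0..<l+t}"
    by (rule bij_betw_byWitness[where f'="sg l"]) (auto simp: sg_sg sg_in)
  moreover have "cp_edge l t u v \<longleftrightarrow> cp_edge l t (sg l u) (sg l v)" for u v
    using sg_edge[OF assms, of t u v] sg_edge[OF assms, of t "sg l u" "sg l v"] by (auto simp: sg_sg)
  moreover have "x \<notin> {0..<l+t} \<Longrightarrow> sg l x = x" for x unfolding sg_def by auto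
  ultimately show ?thesis unfolding graph_aut_def cp_vertices_def by auto
qed

lemma walk:
  assumes "f ` V \<subseteq> V" "inj_on f V" "\<And>u v. u\<in>V \<Longrightarrow> v\<in>V \<Longrightarrow> E u v \<Longrightarrow> E (f u) (f v)"
    "f a = a" "f b = b" "a\<in>V" "b \<in> V" "c\<in>V" "E b c" "c\<noteq>a"
    "\<And>w. w\<in>V \<Longrightarrow> E b w \<Longrightarrow> w = a \<or> w = c"
  shows "f c = c"
proof -
  have "E b (f c)" using assms(3)[of b c] assms by auto
  moreover have "f c \<in> V" using assms by auto
  ultimately have "f c = a \<or> f c = c" using assms(11) by auto
  moreover have "f c \<noteq> a" using assms(2,4,6,8,10) by (metis inj_on_def)
  ultimately show ?thesis by auto
qed

lemma two_nbrs:
  assumes "l \<ge> 3" "t \<ge> 2" "v < l + t" "v \<noteq> l + t - 1"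
  shows "\<exists>w1 w2. w1 < l+t \<and> w2 < l+t \<and> w1 \<noteq> w2 \<and> cp_edge l t v w1 \<and> cp_edge l t v w2"
proof (cases "v < l")
  case True
  show ?thesis
    apply (rule exI[of _ "if v+1<l then v+1 else 0"])
    apply (rule exI[of _ "if v=0 then l-1 else v-1"])
    using assms True by (auto simp: edge_iff)
next
  case False
  show ?thesis
    apply (rule exI[of _ "v+1"])
    apply (rule exI[of _ "if v=l then 0 else v-1"])
    using assms False by (auto simp: edge_iff)
qed

lemma end_nbr:
  assumes "l \<ge> 3" "t \<ge> 2" "cp_edge l t (l+t-1) w"
  shows "w = l + t - 2"
  using assms by (auto simp: edge_iff)

lemma aut_props:
  assumes "f \<in> graph_aut V E"
  shows "f ` V \<subseteq> V" "inj_on f V" "\<And>u v. u\<in>V \<Longrightarrow> v\<in>V \<Longrightarrow> E u v \<Longrightarrow> E (f u) (f v)"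
    "f ` V = V" "\<And>u v. u\<in>V \<Longrightarrow> v\<in>V \<Longrightarrow> E (f u) (f v) \<Longrightarrow> E u v"
    "\<And>x. x \<notin> V \<Longrightarrow> f x = x"
  using assms unfolding graph_aut_def bij_betw_def by auto

lemma fix_end:
  assumes "l \<ge> 3" "t \<ge> 2" "f \<in> graph_aut (cp_vertices l t) (cp_edge l t)"
  shows "f (l+t-1) = l+t-1"
proof (rule ccontr)
  let ?V = "cp_vertices l t"
  note P = aut_props[OF assms(3)]
  assume ne: "f (l+t-1) \<noteq> l+t-1"
  have eV: "l+t-1 \<in> ?V" using assms unfolding cp_vertices_def by auto
  then have "f (l+t-1) \<in> ?V" using P(1) by auto
  then obtain w1 w2 where w: "w1 \<in> ?V" "w2 \<in> ?V" "w1 \<noteq> w2" "cp_edge l t (f (l+t-1)) w1"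
     "cp_edge l t (f (l+t-1)) w2"
    using two_nbrs[OF assms(1,2), of "f (l+t-1)"] ne unfolding cp_vertices_def by auto
  obtain u1 where u1: "u1 \<in> ?V" "f u1 = w1" using w(1) P(4) by (metis imageE)
  obtain u2 where u2: "u2 \<in> ?V" "f u2 = w2" using w(2) P(4) by (metis imageE)
  have "cp_edge l t (l+t-1) u1" using P(5)[OF eV u1(1)] u1 w by auto
  then have "u1 = l+t-2" using end_nbr assms by blast
  moreover have "cp_edge l t (l+t-1) u2" using P(5)[OF eV u2(1)] u2 w by auto
  then have "u2 = l+t-2" using end_nbr assms by blast
  ultimately show False using u1 u2 w by auto
qed

lemma nbr_path:
  assumes "l \<ge> 3" "l+1 \<le> b" "b+1 < l+t" "cp_edge l t b w"
  shows "w = b+1 \<or> w = b - 1"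
  using assms unfolding edge_iff[OF assms(1)] by auto

lemma path_step:
  assumes "l \<ge> 3" "l+1 \<le> b" "b+1 < l+t" "f \<in> graph_aut (cp_vertices l t) (cp_edge l t)"
    "f (b+1) = b+1" "f b = b"
  shows "f (b-1) = b-1"
proof (rule walk[where f=f and V="cp_vertices l t" and E="cp_edge l t" and a="b+1" and b=b and c="b-1", OF aut_props(1-3)[OF assms(4)] assms(5,6)])
  show "b+1 \<in> cp_vertices l t" "b \<in> cp_vertices l t" "b - 1 \<in> cp_vertices l t"
    using assms(2,3) unfolding cp_vertices_def by auto
  show "cp_edge l t b (b - 1)" using assms(1,2,3) unfolding edge_iff[OF assms(1)] by auto
  show "b - 1 \<noteq> b + 1" using assms(2) by auto
  show "\<And>w. w \<in> cp_vertices l t \<Longrightarrow> cp_edge l t b w \<Longrightarrow> w = b + 1 \<or> w = b - 1"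
    using nbr_path[OF assms(1-3)] by blast
qed

lemma fix_path:
  assumes "l \<ge> 3" "t \<ge> 2" "f \<in> graph_aut (cp_vertices l t) (cp_edge l t)"
  shows "d \<le> t - 2 \<Longrightarrow> f (l+t-1-d) = l+t-1-d \<and> f (l+t-2-d) = l+t-2-d"
proof (induction d)
  let ?V = "cp_vertices l t"
  note P = aut_props[OF assms(3)]
  case 0
  have e: "f (l+t-1) = l+t-1" using fix_end[OF assms] .
  have eV: "l+t-1 \<in> ?V" "l+t-2 \<in> ?V" using assms unfolding cp_vertices_def by auto
  have "cp_edge l t (l+t-1) (l+t-2)" using assms by (auto simp: edge_iff)
  then have "cp_edge l t (l+t-1) (f (l+t-2))" using P(3)[OF eV] e by auto
  then have "f (l+t-2) = l+t-2" using end_nbr assms by blast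
  then show ?case using e by simp
next
  case (Suc d)
  then have IH: "f (l+t-1-d) = l+t-1-d" "f (l+t-2-d) = l+t-2-d" by auto
  define b where "b = l+t-2-d"
  have b1: "l+1 \<le> b" "b+1 < l+t" using Suc.prems assms unfolding b_def by auto
  have b2: "b+1 = l+t-1-d" "b-1 = l+t-2-Suc d" "b = l+t-1-Suc d" using Suc.prems assms unfolding b_def by auto
  have fb: "f (b+1) = b+1" "f b = b" using IH b2 b_def by metis+
  have "f (b-1) = b-1" by (rule path_step[OF assms(1) b1 assms(3) fb])
  then show ?case using fb b2 by metis
qed

lemma zero_step:
  assumes "l \<ge> 3" "t \<ge> 2" "f \<in> graph_aut (cp_vertices l t) (cp_edge l t)"
    "f (l+1) = l+1" "f l = l"
  shows "f 0 = 0"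
proof (rule walk[where f=f and V="cp_vertices l t" and E="cp_edge l t" and a="l+1" and b=l and c=0,
      OF aut_props(1-3)[OF assms(3)] assms(4,5)])
  show "l+1 \<in> cp_vertices l t" "l \<in> cp_vertices l t" "0 \<in> cp_vertices l t"
    using assms unfolding cp_vertices_def by auto
  show "cp_edge l t l 0" using assms unfolding edge_iff[OF assms(1)] by auto
  show "0 \<noteq> l + 1" by auto
  show "\<And>w. w \<in> cp_vertices l t \<Longrightarrow> cp_edge l t l w \<Longrightarrow> w = l + 1 \<or> w = 0"
    using assms unfolding edge_iff[OF assms(1)] by auto
qed

lemma fix_path_all:
  assumes "l \<ge> 3" "t \<ge> 2" "f \<in> graph_aut (cp_vertices l t) (cp_edge l t)"
  shows "f 0 = 0" "\<And>x. l \<le> x \<Longrightarrow> x < l + t \<Longrightarrow> f x = x"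
proof -
  have A: "f x = x" if "l \<le> x" "x < l + t" for x
  proof (cases "x = l")
    case True
    have "l + t - 2 - (t - 2) = l" using assms by auto
    then show ?thesis using fix_path[OF assms, of "t-2"] True by auto
  next
    case False
    then show ?thesis using fix_path[OF assms, of "l+t-1-x"] that assms by simp
  qed
  then show "\<And>x. l \<le> x \<Longrightarrow> x < l + t \<Longrightarrow> f x = x" .
  show "f 0 = 0" using zero_step[OF assms] A assms by simp
qed

lemma cyc_step:
  assumes "l \<ge> 3"
    and h: "h ` cp_vertices l t \<subseteq> cp_vertices l t" "inj_on h (cp_vertices l t)"
       "\<And>u v. u\<in>cp_vertices l t \<Longrightarrow> v\<in>cp_vertices l t \<Longrightarrow> cp_edge l t u v \<Longrightarrow> cp_edge l t (h u) (h v)"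
    and x: "1 \<le> x" "x + 1 < l" "h (x-1) = x-1" "h x = x"
  shows "h (x+1) = x+1"
proof (rule walk[where f=h and V="cp_vertices l t" and E="cp_edge l t" and a="x-1" and b=x and c="x+1",
      OF h x(3,4)])
  show "x-1 \<in> cp_vertices l t" "x \<in> cp_vertices l t" "x+1 \<in> cp_vertices l t"
    using x unfolding cp_vertices_def by auto
  show "cp_edge l t x (x+1)" using x unfolding edge_iff[OF assms(1)] by auto
  show "x + 1 \<noteq> x - 1" by auto
  show "\<And>w. w \<in> cp_vertices l t \<Longrightarrow> cp_edge l t x w \<Longrightarrow> w = x - 1 \<or> w = x + 1"
    using x unfolding edge_iff[OF assms(1)] by auto
qed

lemma cyc_fix:
  assumes "l \<ge> 3"
    and h: "h ` cp_vertices l t \<subseteq> cp_vertices l t" "inj_on h (cp_vertices l t)"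
       "\<And>u v. u\<in>cp_vertices l t \<Longrightarrow> v\<in>cp_vertices l t \<Longrightarrow> cp_edge l t u v \<Longrightarrow> cp_edge l t (h u) (h v)"
    and h01: "h 0 = 0" "h 1 = 1"
  shows "x < l \<Longrightarrow> h x = x"
proof -
  have "1 \<le> x \<Longrightarrow> x < l \<Longrightarrow> h x = x \<and> h (x-1) = x-1" for x
  proof (induction x)
    case 0 then show ?case by simp
  next
    case (Suc x)
    show ?case
    proof (cases "x = 0")
      case True then show ?thesis using h01 by simp
    next
      case False
      then have IH: "h x = x" "h (x-1) = x-1" using Suc by auto
      have "h (x+1) = x+1"
        by (rule cyc_step[OF assms(1) h]) (use Suc.prems False IH in auto)
      then show ?thesis using IH by simp
    qed
  qed
  then show "x < l \<Longrightarrow> h x = x" using h01 by (cases "x = 0") auto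
qed

lemma nbr0:
  assumes "l \<ge> 3" "cp_edge l t 0 y" "y \<noteq> l"
  shows "y = 1 \<or> y = l - 1"
  using assms unfolding edge_iff[OF assms(1)] by auto

lemma aut_eq:
  assumes "l \<ge> 3" "t \<ge> 2"
  shows "graph_aut (cp_vertices l t) (cp_edge l t) = {id, sg l}"
proof
  let ?V = "cp_vertices l t"
  let ?E = "cp_edge l t"
  show "{id, sg l} \<subseteq> graph_aut ?V ?E"
    using sg_aut[OF assms(1)] unfolding graph_aut_def by auto
  show "graph_aut ?V ?E \<subseteq> {id, sg l}"
  proof
    fix f assume f: "f \<in> graph_aut ?V ?E"
    note P = aut_props[OF f]
    note Q = fix_path_all[OF assms f]
    have 1: "1 \<in> ?V" "0 \<in> ?V" "l \<in> ?V" using assms unfolding cp_vertices_def by auto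
    have e01: "?E 0 1" using assms by (auto simp: edge_iff)
    have "?E 0 (f 1)" using P(3)[OF 1(2,1) e01] Q(1) by simp
    moreover have "f 1 \<noteq> l"
    proof
      assume "f 1 = l"
      then have "f 1 = f l" using Q(2)[of l] assms by simp
      then have "1 = l" using P(2) 1 by (meson inj_onD)
      then show False using assms by simp
    qed
    moreover have "f 1 < l + t" using P(1) 1(1) unfolding cp_vertices_def by (meson atLeastLessThan_iff image_subset_iff)
    ultimately have f1: "f 1 = 1 \<or> f 1 = l - 1" using nbr0[OF assms(1)] by blast
    have out: "\<And>x. x \<notin> ?V \<Longrightarrow> f x = x" using P(6) .
    show "f \<in> {id, sg l}"
    proof (cases "f 1 = 1")
      case True
      have "f x = x" for x
      proof -
        consider "x < l" | "l \<le> x \<and> x < l + t" | "x \<notin> ?V" unfolding cp_vertices_def by fastforce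
        then show ?thesis
        proof cases
          case 1 then show ?thesis using cyc_fix[OF assms(1) P(1-3) Q(1) True] by blast
        qed (use Q(2) out in auto)
      qed
      then have "f = id" by (simp add: fun_eq_iff)
      then show ?thesis by simp
    next
      case False
      then have f1': "f 1 = l - 1" using f1 by auto
      let ?g = "sg l \<circ> f"
      have g1: "?g ` ?V \<subseteq> ?V" using P(1) sg_in unfolding cp_vertices_def by (auto simp: image_subset_iff)
      have injsg: "inj (sg l)" by (metis injI sg_sg)
      have g2: "inj_on ?g ?V"
        by (rule comp_inj_on[OF P(2) inj_on_subset[OF injsg subset_UNIV]])
      have g3: "?E (?g u) (?g v)" if "u \<in> ?V" "v \<in> ?V" "?E u v" for u v
        using sg_edge[OF assms(1)] P(3)[OF that] by auto
      have g0: "?g 0 = 0" "?g 1 = 1" using Q(1) f1' assms by (auto simp: sg_def)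
      have "f x = sg l x" for x
      proof -
        consider "x < l" | "l \<le> x \<and> x < l + t" | "x \<notin> ?V" unfolding cp_vertices_def by fastforce
        then show ?thesis
        proof cases
          case 1 then have "sg l (f x) = x" using cyc_fix[OF assms(1) g1 g2 g3 g0] by auto
          then show ?thesis by (metis sg_sg)
        next
          case 2 then show ?thesis using Q(2) by (auto simp: sg_def)
        next
          case 3 then show ?thesis using out by (auto simp: sg_def cp_vertices_def)
        qed
      qed
      then have "f = sg l" by (simp add: fun_eq_iff)
      then show ?thesis by simp
    qed
  qed
qed

definition hpot :: "nat \<Rightarrow> nat \<Rightarrow> nat \<Rightarrow> int" where
  "hpot l b v = (if v < l then min \<bar>int v - int b\<bar> (int l - \<bar>int v - int b\<bar>)
                 else min (int b) (int l - int b) + (int v - int l + 1))"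

lemma hpot_lip:
  assumes "l \<ge> 3" "b < l" "cp_edge l t x y"
  shows "hpot l b x \<le> hpot l b y + 1"
  using assms(3) unfolding edge_iff[OF assms(1)] hpot_def using assms(1,2)
  by (auto simp: abs_if min_def split: if_splits)


lemma gdist_le: "(u,v) \<in> adj_rel V E ^^ k \<Longrightarrow> gdist V E u v \<le> k"
  unfolding gdist_def by (rule Least_le)

lemma gdist_self: "gdist V E u u = 0"
  unfolding gdist_def by simp

lemma gdist_lower:
  fixes h :: "'a \<Rightarrow> int"
  assumes "(u,v) \<in> adj_rel V E ^^ k" "\<And>x y. (x,y) \<in> adj_rel V E \<Longrightarrow> h x \<le> h y + 1"
  shows "h u \<le> h v + int (gdist V E u v)"
proof -
  have "(u,v) \<in> adj_rel V E ^^ (gdist V E u v)"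
    unfolding gdist_def by (rule LeastI[of _ k]) (rule assms(1))
  then show ?thesis using lip[of "adj_rel V E" h, OF assms(2)] by blast
qed

lemma cyc_edge:
  assumes "l \<ge> 3" "x < l"
  shows "(x, (x+1) mod l) \<in> adj_rel {0..<l+t} (cp_edge l t)"
       "((x+1) mod l, x) \<in> adj_rel {0..<l+t} (cp_edge l t)"
proof -
  have ne: "(x+1) mod l \<noteq> x"
  proof (cases "x + 1 < l")
    case True then show ?thesis by simp
  next
    case False then have "x + 1 = l" using assms by simp
    then show ?thesis using assms by simp
  qed
  have e: "cp_edge l t x ((x+1) mod l)" "cp_edge l t ((x+1) mod l) x"
    using ne assms unfolding cp_edge_def cp_arc_def by auto
  have "(x+1) mod l < l" using assms by simp
  then have "(x+1) mod l < l + t" by linarith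
  then show "(x, (x+1) mod l) \<in> adj_rel {0..<l+t} (cp_edge l t)"
       "((x+1) mod l, x) \<in> adj_rel {0..<l+t} (cp_edge l t)"
    using e assms unfolding adj_rel_def by auto
qed

lemma fw:
  assumes "l \<ge> 3" "a < l"
  shows "(a, (a+k) mod l) \<in> adj_rel {0..<l+t} (cp_edge l t) ^^ k"
proof (induction k)
  case 0 then show ?case using assms by simp
next
  case (Suc k)
  have "((a+k) mod l, ((a+k) mod l + 1) mod l) \<in> adj_rel {0..<l+t} (cp_edge l t)"
    using cyc_edge[OF assms(1)] assms by simp
  moreover have "((a+k) mod l + 1) mod l = (a + Suc k) mod l" by (simp add: mod_Suc_eq)
  ultimately show ?case using Suc by auto
qed

lemma bw:
  assumes "l \<ge> 3" "c < l"
  shows "((c+k) mod l, c) \<in> adj_rel {0..<l+t} (cp_edge l t) ^^ k"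
proof (induction k)
  case 0 then show ?case using assms by simp
next
  case (Suc k)
  have "(((c+k) mod l + 1) mod l, (c+k) mod l) \<in> adj_rel {0..<l+t} (cp_edge l t)"
    using cyc_edge[OF assms(1)] assms by simp
  moreover have "((c+k) mod l + 1) mod l = (c + Suc k) mod l" by (simp add: mod_Suc_eq)
  ultimately show ?case using Suc by (metis relpow_Suc_I2)
qed

lemma cyc_dist:
  assumes "l \<ge> 3" "a < l" "b < l"
  shows "int (gdist {0..<l+t} (cp_edge l t) a b) = min \<bar>int a - int b\<bar> (int l - \<bar>int a - int b\<bar>)"
proof -
  let ?R = "adj_rel {0..<l+t} (cp_edge l t)"
  let ?d = "gdist {0..<l+t} (cp_edge l t) a b"
  have up: "int ?d \<le> min \<bar>int a - int b\<bar> (int l - \<bar>int a - int b\<bar>)"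
  proof (cases "a \<le> b")
    case True
    have 1: "(a, b) \<in> ?R ^^ (b - a)" using fw[OF assms(1,2), of "b-a" t] True assms by simp
    have "(l + a) mod l = a" using assms by simp
    then have 2: "(a, b) \<in> ?R ^^ (l - b + a)" using bw[OF assms(1,3), of "l-b+a" t] True assms by simp
    show ?thesis using gdist_le[OF 1] gdist_le[OF 2] True assms by auto
  next
    case False
    have 1: "(a, b) \<in> ?R ^^ (a - b)" using bw[OF assms(1,3), of "a-b" t] False assms by simp
    have "(l + b) mod l = b" using assms by simp
    then have 2: "(a, b) \<in> ?R ^^ (l - a + b)" using fw[OF assms(1,2), of "l-a+b" t] False assms by simp
    show ?thesis using gdist_le[OF 1] gdist_le[OF 2] False assms by auto
  qed
  have "(a, b) \<in> ?R ^^ (b + l - a)" using fw[OF assms(1,2), of "b+l-a" t] assms by simp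
  moreover have "\<And>x y. (x,y) \<in> ?R \<Longrightarrow> hpot l b x \<le> hpot l b y + 1"
    using hpot_lip[OF assms(1,3)] unfolding adj_rel_def by auto
  ultimately have "hpot l b a \<le> hpot l b b + int ?d" by (rule gdist_lower)
  then have "min \<bar>int a - int b\<bar> (int l - \<bar>int a - int b\<bar>) \<le> int ?d"
    using assms unfolding hpot_def by simp
  then show ?thesis using up by linarith
qed

definition gfun :: "nat \<Rightarrow> nat \<Rightarrow> int" where
  "gfun l u = min \<bar>2 * int u - int l\<bar> (int l - \<bar>2 * int u - int l\<bar>)"

lemma phase:
  fixes c d :: int
  assumes "a \<le> b" "\<And>u. a \<le> u \<Longrightarrow> u < b \<Longrightarrow> g u = c + d * int u"
  shows "2 * sum g {a..<b} = 2 * int (b - a) * c + d * (int b * (int b - 1) - int a * (int a - 1))"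
proof -
  have "sum g {a..<b} = (\<Sum>x\<in>{a..<b}. (c + d * int x))" using assms(2) by (intro sum.cong) auto
  then show ?thesis using sum_lin[OF assms(1)] by simp
qed

lemma four:
  fixes g :: "nat \<Rightarrow> int"
  assumes "a1 \<le> a2" "a2 \<le> a3" "a3 \<le> a4"
  shows "sum g {0..<a4} = sum g {0..<a1} + sum g {a1..<a2} + sum g {a2..<a3} + sum g {a3..<a4}"
  using assms by (simp add: sum.atLeastLessThan_concat)

lemma sum3:
  assumes "l = 8 * k + 3"
  shows "(\<Sum>u\<in>{0..<l}. gfun l u) = 2 * (8 * int k ^ 2 + 6 * int k + 1)"
proof -
  have s: "sum (gfun l) {0..<l} = sum (gfun l) {0..<2*k+1} + sum (gfun l) {2*k+1..<4*k+2}
     + sum (gfun l) {4*k+2..<6*k+3} + sum (gfun l) {6*k+3..<l}"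
    by (rule four) (use assms in auto)
  have p1: "2 * sum (gfun l) {0..<2*k+1} = 2 * int (2*k+1 - 0) * 0 + 2 * (int (2*k+1) * (int (2*k+1) - 1) - int 0 * (int 0 - 1))"
    by (rule phase) (use assms in \<open>auto simp: gfun_def\<close>)
  have p2: "2 * sum (gfun l) {2*k+1..<4*k+2} = 2 * int (4*k+2 - (2*k+1)) * int l + (-2) * (int (4*k+2) * (int (4*k+2) - 1) - int (2*k+1) * (int (2*k+1) - 1))"
    by (rule phase) (use assms in \<open>auto simp: gfun_def\<close>)
  have p3: "2 * sum (gfun l) {4*k+2..<6*k+3} = 2 * int (6*k+3 - (4*k+2)) * (- int l) + 2 * (int (6*k+3) * (int (6*k+3) - 1) - int (4*k+2) * (int (4*k+2) - 1))"
    by (rule phase) (use assms in \<open>auto simp: gfun_def\<close>)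
  have p4: "2 * sum (gfun l) {6*k+3..<l} = 2 * int (l - (6*k+3)) * (2 * int l) + (-2) * (int l * (int l - 1) - int (6*k+3) * (int (6*k+3) - 1))"
    by (rule phase) (use assms in \<open>auto simp: gfun_def\<close>)
  have "2 * sum (gfun l) {0..<l} = 2 * (2 * (8 * int k ^ 2 + 6 * int k + 1))"
    using s p1 p2 p3 p4 assms by (simp add: algebra_simps power2_eq_square of_nat_diff)
  then show ?thesis by simp
qed

lemma sum5:
  assumes "l = 8 * k + 5"
  shows "(\<Sum>u\<in>{0..<l}. gfun l u) = 2 * (8 * int k ^ 2 + 10 * int k + 3)"
proof -
  have s: "sum (gfun l) {0..<l} = sum (gfun l) {0..<2*k+2} + sum (gfun l) {2*k+2..<4*k+3}
     + sum (gfun l) {4*k+3..<6*k+4} + sum (gfun l) {6*k+4..<l}"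
    by (rule four) (use assms in auto)
  have p1: "2 * sum (gfun l) {0..<2*k+2} = 2 * int (2*k+2 - 0) * 0 + 2 * (int (2*k+2) * (int (2*k+2) - 1) - int 0 * (int 0 - 1))"
    by (rule phase) (use assms in \<open>auto simp: gfun_def\<close>)
  have p2: "2 * sum (gfun l) {2*k+2..<4*k+3} = 2 * int (4*k+3 - (2*k+2)) * int l + (-2) * (int (4*k+3) * (int (4*k+3) - 1) - int (2*k+2) * (int (2*k+2) - 1))"
    by (rule phase) (use assms in \<open>auto simp: gfun_def\<close>)
  have p3: "2 * sum (gfun l) {4*k+3..<6*k+4} = 2 * int (6*k+4 - (4*k+3)) * (- int l) + 2 * (int (6*k+4) * (int (6*k+4) - 1) - int (4*k+3) * (int (4*k+3) - 1))"
    by (rule phase) (use assms in \<open>auto simp: gfun_def\<close>)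
  have p4: "2 * sum (gfun l) {6*k+4..<l} = 2 * int (l - (6*k+4)) * (2 * int l) + (-2) * (int l * (int l - 1) - int (6*k+4) * (int (6*k+4) - 1))"
    by (rule phase) (use assms in \<open>auto simp: gfun_def\<close>)
  have "2 * sum (gfun l) {0..<l} = 2 * (2 * (8 * int k ^ 2 + 10 * int k + 3))"
    using s p1 p2 p3 p4 assms by (simp add: algebra_simps power2_eq_square of_nat_diff)
  then show ?thesis by simp
qed

lemma dist_sg:
  assumes "l \<ge> 3" "u < l"
  shows "int (gdist (cp_vertices l t) (cp_edge l t) u (sg l u)) = gfun l u"
proof (cases "u = 0")
  case True
  then show ?thesis using cyc_dist[OF assms(1), of 0 0 t] assms unfolding cp_vertices_def gfun_def sg_def
    by simp
next
  case False
  then have "sg l u = l - u" "l - u < l" using assms unfolding sg_def by auto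
  then show ?thesis using cyc_dist[OF assms(1,2), of "l-u" t] assms unfolding cp_vertices_def gfun_def
    by (simp add: of_nat_diff)
qed

lemma GP_val:
  assumes "l \<ge> 3" "t \<ge> 2"
  shows "GP (cp_vertices l t) (cp_edge l t) = real (l+t) / 4 * of_int (\<Sum>u\<in>{0..<l}. gfun l u)"
proof -
  let ?V = "cp_vertices l t" let ?E = "cp_edge l t"
  let ?D = "gdist ?V ?E"
  have A: "graph_aut ?V ?E = {id, sg l}" using aut_eq[OF assms] .
  have ne: "id \<noteq> sg l"
  proof
    assume "id = sg l"
    then have "sg l 1 = 1" by (metis id_apply)
    then show False using assms unfolding sg_def by auto
  qed
  have cA: "card (graph_aut ?V ?E) = 2" using A ne by simp
  have inner: "(\<Sum>\<alpha>\<in>graph_aut ?V ?E. real (?D u (\<alpha> u))) = real (?D u (sg l u))" for u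
    using A ne by (simp add: gdist_self)
  have split: "(\<Sum>u\<in>?V. real (?D u (sg l u))) = (\<Sum>u\<in>{0..<l}. real (?D u (sg l u))) + (\<Sum>u\<in>{l..<l+t}. real (?D u (sg l u)))"
    unfolding cp_vertices_def by (rule sum.atLeastLessThan_concat[symmetric]) auto
  have z: "(\<Sum>u\<in>{l..<l+t}. real (?D u (sg l u))) = 0"
    by (rule sum.neutral) (auto simp: sg_def gdist_self)
  have c: "(\<Sum>u\<in>{0..<l}. real (?D u (sg l u))) = (\<Sum>u\<in>{0..<l}. real_of_int (gfun l u))"
  proof (rule sum.cong)
    fix u assume "u \<in> {0..<l}"
    then have "int (?D u (sg l u)) = gfun l u" using dist_sg[OF assms(1)] by simp
    then show "real (?D u (sg l u)) = real_of_int (gfun l u)" by (metis of_int_of_nat_eq)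
  qed simp
  have cV: "card ?V = l + t" unfolding cp_vertices_def by simp
  show ?thesis unfolding GP_def cA inner split z c cV by simp
qed

theorem theorem4p1:
  fixes l t :: nat
  assumes "odd l" and "l mod 8 = 3 \<or> l mod 8 = 5"
    and "t > 0" and "even t"
  shows "card (cp_vertices l t) = l + t
         \<and> GP (cp_vertices l t) (cp_edge l t) \<notin> \<int>"
proof
  show "card (cp_vertices l t) = l + t" unfolding cp_vertices_def by simp
  have l3: "l \<ge> 3" using assms(2) by presburger
  have t2: "t \<ge> 2" using assms(3,4) by presburger
  obtain q :: int where q: "(\<Sum>u\<in>{0..<l}. gfun l u) = 2 * q" "odd q"
  proof (cases "l mod 8 = 3")
    case True
    then have "l = 8 * (l div 8) + 3" by presburger
    note e = sum3[OF this]
    have "odd (8 * int (l div 8) ^ 2 + 6 * int (l div 8) + 1)" by simp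
    then show ?thesis using that e by blast
  next
    case False
    then have "l = 8 * (l div 8) + 5" using assms(2) by presburger
    note e = sum5[OF this]
    have "odd (8 * int (l div 8) ^ 2 + 10 * int (l div 8) + 3)" by simp
    then show ?thesis using that e by blast
  qed
  have odd_lt: "odd (int (l + t))" using assms(1,4) by simp
  show "GP (cp_vertices l t) (cp_edge l t) \<notin> \<int>"
  proof
    assume "GP (cp_vertices l t) (cp_edge l t) \<in> \<int>"
    then obtain z where z: "GP (cp_vertices l t) (cp_edge l t) = of_int z" by (metis Ints_cases)
    have "real (l+t) / 4 * of_int (2 * q) = of_int z" using z GP_val[OF l3 t2] q(1) by simp
    then have "real_of_int (int (l+t) * q) = real_of_int (2 * z)" by (simp add: field_simps)
    then have "int (l+t) * q = 2 * z" by (metis of_int_eq_iff)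
    then have "even (int (l+t) * q)" by simp
    then show False using odd_lt q(2) by simp
  qed
qed

end
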